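(* Let $B$ be a C*-algebra and $A$ a regular subalgebra of $B$. Then: (i) for every closed two-sided ideal $J$ of $B$, $J\cap A$ is normalizer-invariant; (ii) every normalizer-invariant closed two-sided ideal of $A$ is $B$-invariant; (iii) $A$ satisfies axiom (inv) relative to $B$.
   Context: $A\subseteq B$ is a closed *-subalgebra. A normalizer of $A$ in $B$ is an element $n\in B$ with $n^*An\subseteq A$ and $nAn^*\subseteq A$. $A$ is a regular subalgebra of $B$ if the normalizers span a dense subspace of $B$ and $A$ contains an approximate unit for $B$. A subset $S\subseteq A$ is normalizer-invariant if $nSn^*\subseteq S$ for every normalizer $n$. For $S\subseteq B$, $S$ is $B$-invariant if $[SB]=[BS]$, where $[\cdot]$ is closed linear span. $A$ satisfies axiom (inv) relative to $B$ if $J\cap A$ is $B$-invariant for every closed two-sided ideal $J$ of $B$. *)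

theory Defs
  imports "HOL-Analysis.Analysis"
begin

text \<open>The real structure comes from real_normed_algebra;
the complex scalar multiplication cscale extends scaleR.\<close>

class cstar_algebra = real_normed_algebra + banach +
  fixes cscale :: "complex \<Rightarrow> 'a \<Rightarrow> 'a"
    and cstar :: "'a \<Rightarrow> 'a"
  assumes cscale_of_real: "cscale (of_real r) x = scaleR r x"
    and cscale_add_right: "cscale c (x + y) = cscale c x + cscale c y"
    and cscale_add_left: "cscale (c + d) x = cscale c x + cscale d x"
    and cscale_cscale: "cscale c (cscale d x) = cscale (c * d) x"
    and cscale_one: "cscale 1 x = x"
    and norm_cscale: "norm (cscale c x) = cmod c * norm x"
    and cscale_mult_left: "cscale c x * y = cscale c (x * y)"
    and cscale_mult_right: "x * cscale c y = cscale c (x * y)"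
    and cstar_cstar: "cstar (cstar x) = x"
    and cstar_add: "cstar (x + y) = cstar x + cstar y"
    and cstar_cscale: "cstar (cscale c x) = cscale (cnj c) (cstar x)"
    and cstar_mult: "cstar (x * y) = cstar y * cstar x"
    and cstar_identity: "norm (cstar x * x) = norm x ^ 2"

definition csubspace :: "'a::cstar_algebra set \<Rightarrow> bool" where
  "csubspace S \<longleftrightarrow> 0 \<in> S \<and> (\<forall>x\<in>S. \<forall>y\<in>S. x + y \<in> S) \<and> (\<forall>c. \<forall>x\<in>S. cscale c x \<in> S)"

definition clin_span :: "'a::cstar_algebra set \<Rightarrow> 'a set" where
  "clin_span S = {x. \<exists>F c. finite F \<and> F \<subseteq> S \<and> x = (\<Sum>s\<in>F. cscale (c s) s)}"

definition clspan :: "'a::cstar_algebra set \<Rightarrow> 'a set" where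
  "clspan S = closure (clin_span S)"

definition setmult :: "'a::times set \<Rightarrow> 'a set \<Rightarrow> 'a set" where
  "setmult S T = {s * t | s t. s \<in> S \<and> t \<in> T}"

text \<open>Closed *-subalgebra of the C*-algebra B (= UNIV of the type).\<close>
definition closed_star_subalgebra :: "'a::cstar_algebra set \<Rightarrow> bool" where
  "closed_star_subalgebra A \<longleftrightarrow> csubspace A \<and> closed A \<and>
     (\<forall>x\<in>A. \<forall>y\<in>A. x * y \<in> A) \<and> (\<forall>x\<in>A. cstar x \<in> A)"

definition closed_ideal :: "'a::cstar_algebra set \<Rightarrow> bool" where
  "closed_ideal J \<longleftrightarrow> csubspace J \<and> closed J \<and> (\<forall>x\<in>J. \<forall>b. b * x \<in> J \<and> x * b \<in> J)"

definition closed_ideal_of :: "'a::cstar_algebra set \<Rightarrow> 'a set \<Rightarrow> bool" where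
  "closed_ideal_of A I \<longleftrightarrow> I \<subseteq> A \<and> csubspace I \<and> closed I \<and>
     (\<forall>x\<in>I. \<forall>a\<in>A. a * x \<in> I \<and> x * a \<in> I)"

definition cpositive :: "'a::cstar_algebra \<Rightarrow> bool" where
  "cpositive x \<longleftrightarrow> (\<exists>y. x = cstar y * y)"

text \<open>A contains an approximate unit for B: a net of positive contractions in A
(the net is encoded as a proper filter on the algebra, i.e. the image filter of the net)
with e b \<rightarrow> b and b e \<rightarrow> b for all b in B.\<close>
definition contains_approx_unit :: "'a::cstar_algebra set \<Rightarrow> bool" where
  "contains_approx_unit A \<longleftrightarrow> (\<exists>F. F \<noteq> bot \<and>
     eventually (\<lambda>e. e \<in> A \<and> cpositive e \<and> norm e \<le> 1) F \<and>
     (\<forall>b. ((\<lambda>e. e * b) \<longlongrightarrow> b) F \<and> ((\<lambda>e. b * e) \<longlongrightarrow> b) F))"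

definition normalizer :: "'a::cstar_algebra set \<Rightarrow> 'a \<Rightarrow> bool" where
  "normalizer A n \<longleftrightarrow> (\<forall>a\<in>A. cstar n * a * n \<in> A \<and> n * a * cstar n \<in> A)"

definition regular_subalgebra :: "'a::cstar_algebra set \<Rightarrow> bool" where
  "regular_subalgebra A \<longleftrightarrow> closed_star_subalgebra A \<and>
     clspan {n. normalizer A n} = UNIV \<and> contains_approx_unit A"

definition normalizer_invariant :: "'a::cstar_algebra set \<Rightarrow> 'a set \<Rightarrow> bool" where
  "normalizer_invariant A S \<longleftrightarrow> (\<forall>n. normalizer A n \<longrightarrow> (\<forall>s\<in>S. n * s * cstar n \<in> S))"

definition B_invariant :: "'a::cstar_algebra set \<Rightarrow> bool" where
  "B_invariant S \<longleftrightarrow> clspan (setmult S UNIV) = clspan (setmult UNIV S)"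

definition axiom_inv :: "'a::cstar_algebra set \<Rightarrow> bool" where
  "axiom_inv A \<longleftrightarrow> (\<forall>J. closed_ideal J \<longrightarrow> B_invariant (J \<inter> A))"

end

theory Submission
  imports Defs
begin

typedef (overloaded) 'a sop = "UNIV :: ('a::real_normed_vector \<Rightarrow>\<^sub>L 'a) set"
  morphisms opb Abs_sop by simp

setup_lifting type_definition_sop

instantiation sop :: (real_normed_vector) real_normed_vector
begin

lift_definition norm_sop :: "'a sop \<Rightarrow> real" is norm .
lift_definition minus_sop :: "'a sop \<Rightarrow> 'a sop \<Rightarrow> 'a sop" is "(-)" .
lift_definition plus_sop :: "'a sop \<Rightarrow> 'a sop \<Rightarrow> 'a sop" is "(+)" .
lift_definition uminus_sop :: "'a sop \<Rightarrow> 'a sop" is "uminus" .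
lift_definition zero_sop :: "'a sop" is "0" .
lift_definition scaleR_sop :: "real \<Rightarrow> 'a sop \<Rightarrow> 'a sop" is "scaleR" .

definition dist_sop :: "'a sop \<Rightarrow> 'a sop \<Rightarrow> real"
  where "dist_sop a b = norm (a - b)"

definition uniformity_sop :: "('a sop \<times> 'a sop) filter" where
  "uniformity_sop = (INF e\<in>{0 <..}. principal {(x, y). dist x y < e})"

definition open_sop :: "'a sop set \<Rightarrow> bool"
  where "open_sop S = (\<forall>x\<in>S. \<forall>\<^sub>F (x', y) in uniformity. x' = x \<longrightarrow> y \<in> S)"

definition sgn_sop :: "'a sop \<Rightarrow> 'a sop"
  where "sgn_sop x = scaleR (inverse (norm x)) x"

instance
  apply standard
  unfolding dist_sop_def open_sop_def sgn_sop_def uniformity_sop_def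
  apply (rule refl | (transfer, force simp: norm_triangle_ineq algebra_simps))+
  done
end

instantiation sop :: (real_normed_vector) "{real_normed_algebra, monoid_mult}"
begin
lift_definition times_sop :: "'a sop \<Rightarrow> 'a sop \<Rightarrow> 'a sop" is "blinfun_compose" .
lift_definition one_sop :: "'a sop" is "id_blinfun" .
instance
  apply standard
  apply (transfer; (rule norm_blinfun_compose | (rule blinfun_eqI, simp add: blinfun.bilinear_simps)))+
  done
end

lemma opb_diff: "opb (a - b) = opb a - opb b" by transfer simp
lemma norm_sop_opb: "norm a = norm (opb a)" by transfer simp

instance sop :: (banach) banach
proof
  fix X :: "nat \<Rightarrow> 'a sop"
  assume "Cauchy X"
  hence "Cauchy (\<lambda>n. opb (X n))"
    unfolding Cauchy_def dist_norm by (simp add: opb_diff[symmetric] norm_sop_opb[symmetric])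
  then obtain L where L: "(\<lambda>n. opb (X n)) \<longlonglongrightarrow> L" using convergent_eq_Cauchy convergent_def by blast
  have "X \<longlonglongrightarrow> Abs_sop L"
    using L unfolding LIMSEQ_iff dist_norm
    by (simp add: norm_sop_opb opb_diff Abs_sop_inverse)
  thus "convergent X" by (auto simp: convergent_def)
qed


definition app :: "'a::real_normed_vector sop \<Rightarrow> 'a \<Rightarrow> 'a" where
  "app T y = blinfun_apply (opb T) y"

lemma app_mult[simp]: "app (a * b) y = app a (app b y)"
  unfolding app_def by transfer simp
lemma app_one[simp]: "app 1 y = y"
  unfolding app_def by transfer simp
lemma app_add[simp]: "app (a + b) y = app a y + app b y"
  unfolding app_def by transfer (simp add: blinfun.bilinear_simps)
lemma app_diff[simp]: "app (a - b) y = app a y - app b y"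
  unfolding app_def by transfer (simp add: blinfun.bilinear_simps)
lemma app_minus[simp]: "app (- a) y = - app a y"
  unfolding app_def by transfer (simp add: blinfun.bilinear_simps)
lemma app_zero[simp]: "app 0 y = 0"
  unfolding app_def by transfer simp
lemma app_scaleR[simp]: "app (r *\<^sub>R a) y = r *\<^sub>R app a y"
  unfolding app_def by transfer (simp add: blinfun.bilinear_simps)
lemma app_sum: "app (sum f A) y = (\<Sum>i\<in>A. app (f i) y)"
  by (induction A rule: infinite_finite_induct) auto

lemma norm_app: "norm (app T y) \<le> norm T * norm y"
  unfolding app_def by transfer (rule norm_blinfun)

lemma norm_sop_bound: "0 \<le> b \<Longrightarrow> (\<And>y. norm (app T y) \<le> b * norm y) \<Longrightarrow> norm T \<le> b"
  unfolding app_def by transfer (rule norm_blinfun_bound)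

lemma bounded_linear_app_left: "bounded_linear (\<lambda>T. app T y)"
proof
  show "app (b1 + b2) y = app b1 y + app b2 y" for b1 b2 by simp
  show "app (r *\<^sub>R b) y = r *\<^sub>R app b y" for r b by simp
  show "\<exists>K. \<forall>x. norm (app x y) \<le> norm x * K"
    by (rule exI[of _ "norm y"]) (simp add: norm_app)
qed

lemma app_suminf: "summable f \<Longrightarrow> app (suminf f) y = (\<Sum>n. app (f n) y)"
  by (rule bounded_linear.suminf[OF bounded_linear_app_left])

lemma norm_one_sop: "norm (1::'a::real_normed_vector sop) \<le> 1"
  by (rule norm_sop_bound) auto

lemma norm_power_sop: "norm ((T::'a::real_normed_vector sop) ^ n) \<le> norm T ^ n"
proof (induction n)
  case 0 then show ?case using norm_one_sop by simp
next
  case (Suc n)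
  have "norm (T ^ Suc n) \<le> norm T * norm (T ^ n)" by (simp add: norm_mult_ineq)
  also have "\<dots> \<le> norm T * norm T ^ n" using Suc by (simp add: mult_left_mono)
  finally show ?case by simp
qed

lemma cscale_zero_right[simp]: "cscale c (0::'a::cstar_algebra) = 0"
proof -
  have "cscale c (0::'a) = cscale c 0 + cscale c 0" using cscale_add_right[of c "0::'a" 0] by simp
  thus ?thesis by simp
qed
lemma cscale_zero_left[simp]: "cscale 0 (x::'a::cstar_algebra) = 0"
  using cscale_of_real[of 0 x] by simp
lemma cscale_minus_left: "cscale (- c) (x::'a::cstar_algebra) = - cscale c x"
proof -
  have "cscale c x + cscale (-c) x = 0" using cscale_add_left[of c "-c" x] by simp
  thus ?thesis by (rule minus_unique[symmetric])
qed
lemma cscale_minus_right: "cscale c (- x::'a::cstar_algebra) = - cscale c x"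
proof -
  have "cscale c x + cscale c (-x) = 0" using cscale_add_right[of c x "-x"] by simp
  thus ?thesis by (rule minus_unique[symmetric])
qed
lemma cscale_diff_right: "cscale c (x - y::'a::cstar_algebra) = cscale c x - cscale c y"
  by (simp only: diff_conv_add_uminus cscale_add_right cscale_minus_right)
lemma cscale_real: "cscale (complex_of_real r) (x::'a::cstar_algebra) = r *\<^sub>R x"
  by (rule cscale_of_real)

lemma cstar_zero[simp]: "cstar (0::'a::cstar_algebra) = 0"
  using cstar_add[of "0::'a" 0] by simp
lemma cstar_minus: "cstar (- x::'a::cstar_algebra) = - cstar x"
proof -
  have "cstar x + cstar (-x) = 0" using cstar_add[of x "-x"] by simp
  thus ?thesis by (rule minus_unique[symmetric])
qed
lemma cstar_diff: "cstar (x - y::'a::cstar_algebra) = cstar x - cstar y"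
  by (simp only: cstar_add cstar_minus diff_conv_add_uminus)
lemma cstar_scaleR: "cstar (r *\<^sub>R x::'a::cstar_algebra) = r *\<^sub>R cstar x"
  using cstar_cscale[of "complex_of_real r" x] by (simp add: cscale_of_real)
lemma cstar_sum: "cstar (sum f A::'a::cstar_algebra) = (\<Sum>i\<in>A. cstar (f i))"
  by (induction A rule: infinite_finite_induct) (auto simp: cstar_add)

lemma norm_cstar[simp]: "norm (cstar (x::'a::cstar_algebra)) = norm x"
proof -
  have le: "norm y \<le> norm (cstar y)" for y :: 'a
  proof (cases "y = 0")
    case True then show ?thesis by simp
  next
    case False
    have "norm y ^ 2 = norm (cstar y * y)" by (simp add: cstar_identity)
    also have "\<dots> \<le> norm (cstar y) * norm y" by (rule norm_mult_ineq)
    finally have "norm y * norm y \<le> norm (cstar y) * norm y" by (simp add: power2_eq_square)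
    then show ?thesis using False by simp
  qed
  show ?thesis using le[of x] le[of "cstar x"] by (simp add: cstar_cstar)
qed

lemma bounded_linear_cstar: "bounded_linear (cstar :: 'a::cstar_algebra \<Rightarrow> 'a)"
  by (rule bounded_linear_intro[where K=1]) (auto simp: cstar_add cstar_scaleR)

lemma cstar_suminf: "summable f \<Longrightarrow> cstar (suminf f::'a::cstar_algebra) = (\<Sum>n. cstar (f n))"
  by (rule bounded_linear.suminf[OF bounded_linear_cstar])

lemma continuous_cstar: "continuous_on S (cstar :: 'a::cstar_algebra \<Rightarrow> 'a)"
  by (rule linear_continuous_on[OF bounded_linear_cstar])

lemma cstar_one_if: "cstar (cstar x * y) = cstar y * (x::'a::cstar_algebra)"
  by (simp add: cstar_mult cstar_cstar)

lemma cstar_est: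
  fixes p y w :: "'a::cstar_algebra"
  assumes "cstar p * p = cstar y * w"
  shows "norm p ^ 2 \<le> norm y * norm w"
proof -
  have "norm p ^ 2 = norm (cstar p * p)" by (simp add: cstar_identity)
  also have "\<dots> \<le> norm y * norm w" using assms norm_mult_ineq[of "cstar y" w] by simp
  finally show ?thesis .
qed

lemma cstar_expand:
  fixes u v :: "'a::cstar_algebra"
  shows "cstar (u + cscale c v) * (u + cscale c v) =
     cstar u * u + cscale c (cstar u * v) + cscale (cnj c) (cstar v * u) + cscale (cnj c * c) (cstar v * v)"
proof -
  have 1: "cstar (u + cscale c v) = cstar u + cscale (cnj c) (cstar v)" by (simp add: cstar_add cstar_cscale)
  have "(cstar u + cscale (cnj c) (cstar v)) * (u + cscale c v) =
     cstar u * u + cstar u * cscale c v + (cscale (cnj c) (cstar v) * u + cscale (cnj c) (cstar v) * cscale c v)"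
    by (simp only: distrib_left distrib_right add_ac)
  also have "\<dots> = cstar u * u + cscale c (cstar u * v) + (cscale (cnj c) (cstar v * u) + cscale (cnj c * c) (cstar v * v))"
    by (simp only: cscale_mult_left cscale_mult_right cscale_cscale mult.commute[of c "cnj c"])
  finally show ?thesis using 1 by (simp only: add.assoc)
qed


definition ssym :: "'a::cstar_algebra sop \<Rightarrow> bool" where
  "ssym T \<longleftrightarrow> (\<forall>y z. cstar (app T y) * z = cstar y * app T z)"

lemma ssymD: "ssym T \<Longrightarrow> cstar (app T y) * z = cstar y * app T z"
  unfolding ssym_def by blast

lemma ssym_one: "ssym 1"
  unfolding ssym_def by simp
lemma ssym_zero: "ssym 0"
  unfolding ssym_def by simp
lemma ssym_add: "ssym a \<Longrightarrow> ssym b \<Longrightarrow> ssym (a + b)"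
  unfolding ssym_def by (simp add: cstar_add distrib_left distrib_right)
lemma ssym_diff: "ssym a \<Longrightarrow> ssym b \<Longrightarrow> ssym (a - b)"
  unfolding ssym_def by (simp add: cstar_diff left_diff_distrib right_diff_distrib)
lemma ssym_scaleR: "ssym a \<Longrightarrow> ssym (r *\<^sub>R a)"
  unfolding ssym_def by (simp add: cstar_scaleR)
lemma ssym_mult:
  assumes "ssym a" "ssym b" "a * b = b * a" shows "ssym (a * b)"
proof -
  have c: "app a (app b z) = app b (app a z)" for z
    using arg_cong[OF assms(3), of "\<lambda>T. app T z"] by simp
  show ?thesis unfolding ssym_def using ssymD[OF assms(1)] ssymD[OF assms(2)] c by simp
qed
lemma ssym_power: "ssym a \<Longrightarrow> ssym (a ^ n)"
  by (induction n) (auto simp: ssym_one ssym_mult power_commutes)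
lemma ssym_sum: "(\<And>i. i \<in> A \<Longrightarrow> ssym (f i)) \<Longrightarrow> ssym (sum f A)"
  by (induction A rule: infinite_finite_induct) (auto simp: ssym_zero ssym_add)

lemma ssym_suminf:
  assumes "summable f" "\<And>n. ssym (f n)"
  shows "ssym (suminf f)"
  unfolding ssym_def
proof (intro allI)
  fix y z :: 'a
  have s1: "summable (\<lambda>n. app (f n) y)" "summable (\<lambda>n. app (f n) z)"
    using bounded_linear.summable[OF bounded_linear_app_left assms(1)] by auto
  have s2: "summable (\<lambda>n. cstar (app (f n) y))"
    using bounded_linear.summable[OF bounded_linear_cstar s1(1)] .
  have "cstar (app (suminf f) y) * z = (\<Sum>n. cstar (app (f n) y)) * z"
    by (simp add: app_suminf[OF assms(1)] cstar_suminf[OF s1(1)])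
  also have "\<dots> = (\<Sum>n. cstar (app (f n) y) * z)" by (rule suminf_mult2[OF s2])
  also have "\<dots> = (\<Sum>n. cstar y * app (f n) z)" using assms(2) by (simp add: ssymD)
  also have "\<dots> = cstar y * (\<Sum>n. app (f n) z)" by (rule suminf_mult[OF s1(2)])
  also have "\<dots> = cstar y * app (suminf f) z" by (simp add: app_suminf[OF assms(1)])
  finally show "cstar (app (suminf f) y) * z = cstar y * app (suminf f) z" .
qed

lemma W_lemma:
  fixes a k :: "'a::cstar_algebra sop"
  assumes sa: "ssym a" and sk: "ssym k" and comm: "a * k = k * a"
  shows "norm a ^ 2 \<le> norm (a * a + k * k)"
proof -
  define D where "D = a * a + k * k"
  have bound: "norm (app a y) \<le> sqrt (norm D) * norm y" for y
  proof -
    define u where "u = app a y"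
    define v where "v = app k y"
    have uv: "cstar u * v = cstar y * app (a * k) y" unfolding u_def v_def using ssymD[OF sa] by simp
    have vu: "cstar v * u = cstar y * app (a * k) y" unfolding u_def v_def using ssymD[OF sk] comm by simp
    have uu: "cstar u * u = cstar y * app (a * a) y" unfolding u_def using ssymD[OF sa] by simp
    have vv: "cstar v * v = cstar y * app (k * k) y" unfolding v_def using ssymD[OF sk] by simp
    have est: "norm (u + cscale c v) \<le> sqrt (norm D) * norm y" if c: "c = \<i> \<or> c = - \<i>" for c
    proof -
      have cc: "cnj c * c = 1" using c by auto
      have cs: "cscale c X + cscale (cnj c) X = 0" for X :: 'a
        using c by (auto simp: cscale_minus_left)
      have "cstar (u + cscale c v) * (u + cscale c v) = cstar y * app D y"
        unfolding cstar_expand cc cscale_one uv vu uu vv D_def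
        using cs[of "cstar y * app (a * k) y"]
        by (simp add: distrib_left add.assoc)
      hence "norm (u + cscale c v) ^ 2 \<le> norm y * norm (app D y)" by (rule cstar_est)
      also have "\<dots> \<le> norm y * (norm D * norm y)" by (simp add: mult_left_mono norm_app)
      also have "\<dots> = (sqrt (norm D) * norm y) ^ 2" by (simp add: power2_eq_square)
      finally show ?thesis by (rule power2_le_imp_le) simp
    qed
    have "(u + cscale \<i> v) + (u + cscale (- \<i>) v) = 2 *\<^sub>R u"
      by (simp add: cscale_minus_left scaleR_2)
    hence "2 * norm u \<le> norm (u + cscale \<i> v) + norm (u + cscale (- \<i>) v)"
      by (metis norm_triangle_ineq norm_scaleR abs_numeral)
    also have "\<dots> \<le> sqrt (norm D) * norm y + sqrt (norm D) * norm y"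
      using est by (intro add_mono) auto
    finally have "norm u \<le> sqrt (norm D) * norm y" by (simp add: mult.commute)
    thus ?thesis unfolding u_def by simp
  qed
  have "norm a \<le> sqrt (norm D)" by (rule norm_sop_bound) (use bound in \<open>auto simp: mult.commute\<close>)
  hence "norm a ^ 2 \<le> sqrt (norm D) ^ 2" by (intro power_mono) auto
  thus ?thesis unfolding D_def by simp
qed

function cc :: "nat \<Rightarrow> real" where
  "cc n = (if n = 0 then 0 else if n = 1 then 1/2 else (\<Sum>i\<in>{1..<n}. cc i * cc (n - i)) / 2)"
  by auto
termination by (relation "Wellfounded.measure id") auto

declare cc.simps[simp del]

lemma cc_0[simp]: "cc 0 = 0" by (simp add: cc.simps)
lemma cc_1[simp]: "cc 1 = 1/2" by (simp add: cc.simps)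
lemma cc_Suc0[simp]: "cc (Suc 0) = 1/2" by (simp add: cc.simps)

lemma cc_nonneg: "cc n \<ge> 0"
proof (induction n rule: less_induct)
  case (less n)
  show ?case
    by (subst cc.simps) (auto intro!: sum_nonneg mult_nonneg_nonneg less.IH)
qed

definition conv :: "nat \<Rightarrow> real" where
  "conv n = (\<Sum>i\<le>n. cc i * cc (n - i))"

lemma conv_eq: "2 * cc n = conv n + (if n = 1 then 1 else 0)"
proof (cases "n \<ge> 2")
  case True
  have "conv n = (\<Sum>i\<in>{1..<n}. cc i * cc (n - i))"
    unfolding conv_def
  proof (rule sum.mono_neutral_right)
    show "\<forall>i\<in>{..n} - {1..<n}. cc i * cc (n - i) = 0"
    proof
      fix i assume "i \<in> {..n} - {1..<n}"
      then have "i = 0 \<or> i = n" by auto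
      then show "cc i * cc (n - i) = 0" by auto
    qed
  qed auto
  moreover have "2 * cc n = (\<Sum>i\<in>{1..<n}. cc i * cc (n - i))"
    using True by (subst cc.simps) auto
  ultimately show ?thesis using True by simp
next
  case False
  then have "n = 0 \<or> n = 1" by auto
  then show ?thesis by (auto simp: conv_def)
qed

lemma cc_partial_le: "(\<Sum>n<N. cc n) \<le> 1"
proof (induction N)
  case 0 then show ?case by simp
next
  case (Suc N)
  define s where "s = (\<Sum>n<N. cc n)"
  have s0: "0 \<le> s" unfolding s_def by (rule sum_nonneg) (simp add: cc_nonneg)
  have "2 * (\<Sum>n<Suc N. cc n) = (\<Sum>n<Suc N. conv n + (if n = 1 then 1 else 0))"
    by (simp add: sum_distrib_left conv_eq)
  also have "\<dots> = (\<Sum>n<Suc N. conv n) + (\<Sum>n<Suc N. (if n = 1 then 1 else 0))"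
    by (rule sum.distrib)
  also have "(\<Sum>n<Suc N. (if n = 1 then 1 else 0::real)) \<le> 1"
    by (simp add: sum.delta)
  also have "(\<Sum>n<Suc N. conv n) = (\<Sum>(i,j)\<in>{(i,j). i+j < Suc N}. cc i * cc j)"
    unfolding conv_def by (rule sum.triangle_reindex[symmetric])
  also have "\<dots> = (\<Sum>(i,j)\<in>{(i,j). i+j < Suc N} \<inter> ({..<N} \<times> {..<N}). cc i * cc j)"
  proof (rule sum.mono_neutral_right)
    show "finite {(i,j). i+j < Suc N}"
      by (rule finite_subset[of _ "{..N} \<times> {..N}"]) auto
    show "{(i,j). i+j < Suc N} \<inter> ({..<N} \<times> {..<N}) \<subseteq> {(i,j). i+j < Suc N}" by auto
    show "\<forall>x\<in>{(i,j). i+j < Suc N} - {(i,j). i+j < Suc N} \<inter> ({..<N} \<times> {..<N}).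
            (case x of (i,j) \<Rightarrow> cc i * cc j) = 0"
    proof
      fix x assume "x \<in> {(i,j). i+j < Suc N} - {(i,j). i+j < Suc N} \<inter> ({..<N} \<times> {..<N})"
      then obtain i j where x: "x = (i,j)" "i + j < Suc N" "\<not> (i < N \<and> j < N)" by auto
      then have "i = 0 \<or> j = 0" by arith
      then show "(case x of (i,j) \<Rightarrow> cc i * cc j) = 0" using x by auto
    qed
  qed
  also have "\<dots> \<le> (\<Sum>(i,j)\<in>{..<N} \<times> {..<N}. cc i * cc j)"
    by (rule sum_mono2) (auto simp: cc_nonneg)
  also have "\<dots> = s * s"
    unfolding s_def sum_product sum.cartesian_product by simp
  also have "\<dots> \<le> 1" using Suc.IH s0 unfolding s_def[symmetric]
    by (metis mult_le_one)
  finally show ?case by simp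
qed

lemma summable_cc: "summable cc"
proof (rule bounded_imp_summable[where B=1])
  show "0 \<le> cc n" for n by (rule cc_nonneg)
  show "(\<Sum>k\<le>n. cc k) \<le> 1" for n using cc_partial_le[of "Suc n"] by (simp add: lessThan_Suc_atMost)
qed

lemma suminf_cc_le: "(\<Sum>n. cc n) \<le> 1"
  by (rule suminf_le_const[OF summable_cc]) (use cc_partial_le in auto)


definition sqs :: "'a::cstar_algebra sop \<Rightarrow> 'a sop" where
  "sqs T = (\<Sum>n. cc n *\<^sub>R T ^ n)"

lemma power_commutes_gen: "(U::'a::monoid_mult) * T = T * U \<Longrightarrow> U * T ^ n = T ^ n * U"
  by (induction n) (simp_all add: mult.assoc[symmetric], metis mult.assoc)

context
  fixes T :: "'a::cstar_algebra sop"
  assumes nT: "norm T \<le> 1"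
begin

lemma sqs_norm_summable: "summable (\<lambda>n. norm (cc n *\<^sub>R T ^ n))"
proof (rule summable_comparison_test[OF _ summable_cc])
  have "norm (norm (cc n *\<^sub>R T ^ n)) \<le> cc n" for n
  proof -
    have "norm (T ^ n) \<le> 1" using norm_power_sop[of T n] nT
      by (meson norm_ge_zero order_trans power_le_one)
    then show ?thesis using cc_nonneg[of n] by (simp add: mult_left_le)
  qed
  then show "\<exists>N. \<forall>n\<ge>N. norm (norm (cc n *\<^sub>R T ^ n)) \<le> cc n" by blast
qed

lemma sqs_summable: "summable (\<lambda>n. cc n *\<^sub>R T ^ n)"
  by (rule summable_norm_cancel[OF sqs_norm_summable])

lemma norm_sqs: "norm (sqs T) \<le> 1"
proof -
  have "norm (sqs T) \<le> (\<Sum>n. norm (cc n *\<^sub>R T ^ n))"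
    unfolding sqs_def by (rule summable_norm[OF sqs_norm_summable])
  also have "\<dots> \<le> (\<Sum>n. cc n)"
  proof (rule suminf_le[OF _ sqs_norm_summable summable_cc])
    fix n
    have "norm (T ^ n) \<le> 1" using norm_power_sop[of T n] nT
      by (meson norm_ge_zero order_trans power_le_one)
    then show "norm (cc n *\<^sub>R T ^ n) \<le> cc n" using cc_nonneg[of n] by (simp add: mult_left_le)
  qed
  also have "\<dots> \<le> 1" by (rule suminf_cc_le)
  finally show ?thesis .
qed

lemma sqs_eq: "2 *\<^sub>R sqs T - sqs T * sqs T = T"
proof -
  define a where "a = (\<lambda>n. cc n *\<^sub>R T ^ n)"
  have na: "summable (\<lambda>n. norm (a n))" unfolding a_def by (rule sqs_norm_summable)
  have sa: "a sums sqs T" unfolding a_def sqs_def by (rule summable_sums[OF sqs_summable])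
  have cp: "(\<lambda>k. \<Sum>i\<le>k. a i * a (k - i)) sums (sqs T * sqs T)"
    using Cauchy_product_sums[OF na na] sums_unique[OF sa] by simp
  have "(\<Sum>i\<le>k. a i * a (k - i)) = conv k *\<^sub>R T ^ k" for k
  proof -
    have "(\<Sum>i\<le>k. a i * a (k - i)) = (\<Sum>i\<le>k. (cc i * cc (k - i)) *\<^sub>R T ^ k)"
    proof (rule sum.cong[OF refl])
      fix i assume "i \<in> {..k}"
      then have "T ^ i * T ^ (k - i) = T ^ k" by (simp add: power_add[symmetric])
      then show "a i * a (k - i) = (cc i * cc (k - i)) *\<^sub>R T ^ k"
        unfolding a_def by simp
    qed
    also have "\<dots> = conv k *\<^sub>R T ^ k" unfolding conv_def by (simp add: scaleR_sum_left)
    finally show ?thesis .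
  qed
  with cp have cp2: "(\<lambda>k. conv k *\<^sub>R T ^ k) sums (sqs T * sqs T)" by simp
  have s2: "(\<lambda>k. (2 * cc k) *\<^sub>R T ^ k) sums (2 *\<^sub>R sqs T)"
    using sums_scaleR_right[OF sa, of 2] unfolding a_def by simp
  have "(\<lambda>k. (2 * cc k) *\<^sub>R T ^ k - conv k *\<^sub>R T ^ k) sums (2 *\<^sub>R sqs T - sqs T * sqs T)"
    by (rule sums_diff[OF s2 cp2])
  moreover have "(\<lambda>k. (2 * cc k) *\<^sub>R T ^ k - conv k *\<^sub>R T ^ k) = (\<lambda>k. if k = 1 then T ^ k else 0)"
    by (rule ext) (simp add: conv_eq scaleR_diff_left[symmetric])
  ultimately have "(\<lambda>k. if k = 1 then T ^ k else 0) sums (2 *\<^sub>R sqs T - sqs T * sqs T)" by simp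
  moreover have "(\<lambda>k. if k = 1 then T ^ k else 0) sums (T ^ 1)" by (rule sums_single)
  ultimately show ?thesis using sums_unique2 by fastforce
qed

lemma sqs_comm: "U * T = T * U \<Longrightarrow> U * sqs T = sqs T * U"
proof -
  assume c: "U * T = T * U"
  have "U * sqs T = (\<Sum>n. U * (cc n *\<^sub>R T ^ n))"
    unfolding sqs_def by (rule suminf_mult[OF sqs_summable, symmetric])
  also have "\<dots> = (\<Sum>n. (cc n *\<^sub>R T ^ n) * U)"
    using power_commutes_gen[OF c] by simp
  also have "\<dots> = sqs T * U"
    unfolding sqs_def by (rule suminf_mult2[OF sqs_summable, symmetric])
  finally show ?thesis .
qed

lemma ssym_sqs: "ssym T \<Longrightarrow> ssym (sqs T)"
  unfolding sqs_def
  by (rule ssym_suminf[OF sqs_summable]) (intro ssym_scaleR ssym_power)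

lemma sqrt_one_minus: "(1 - sqs T) * (1 - sqs T) = 1 - T"
proof -
  have "(1 - sqs T) * (1 - sqs T) = 1 - (2 *\<^sub>R sqs T - sqs T * sqs T)"
    by (simp add: algebra_simps scaleR_2)
  then show ?thesis by (simp add: sqs_eq)
qed

end

definition bic :: "'a::cstar_algebra sop \<Rightarrow> 'a sop set" where
  "bic H = {T. ssym T \<and> (\<forall>U. U * H = H * U \<longrightarrow> U * T = T * U)}"

lemma bicI: "ssym T \<Longrightarrow> (\<And>U. U * H = H * U \<Longrightarrow> U * T = T * U) \<Longrightarrow> T \<in> bic H"
  unfolding bic_def by blast

lemma bic_ssym: "T \<in> bic H \<Longrightarrow> ssym T"
  unfolding bic_def by blast

lemma bic_comm': "T \<in> bic H \<Longrightarrow> U * H = H * U \<Longrightarrow> U * T = T * U"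
  unfolding bic_def by blast

lemma bic_H: "ssym H \<Longrightarrow> H \<in> bic H"
  by (rule bicI) auto

lemma bic_comm: "S \<in> bic H \<Longrightarrow> T \<in> bic H \<Longrightarrow> S * T = T * S"
proof -
  assume S: "S \<in> bic H" and T: "T \<in> bic H"
  have "H * T = T * H" using bic_comm'[OF T, of H] by simp
  then show ?thesis using bic_comm'[OF S, of T] by simp
qed

lemma bic_one: "1 \<in> bic H" by (rule bicI) (auto simp: ssym_one)
lemma bic_zero: "0 \<in> bic H" by (rule bicI) (auto simp: ssym_zero)
lemma bic_add: "S \<in> bic H \<Longrightarrow> T \<in> bic H \<Longrightarrow> S + T \<in> bic H"
proof (rule bicI)
  assume S: "S \<in> bic H" and T: "T \<in> bic H"
  show "ssym (S + T)" using S T by (simp add: ssym_add bic_ssym)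
  fix U assume u: "U * H = H * U"
  show "U * (S + T) = (S + T) * U" using bic_comm'[OF S u] bic_comm'[OF T u] by (simp add: distrib_left distrib_right)
qed
lemma bic_diff: "S \<in> bic H \<Longrightarrow> T \<in> bic H \<Longrightarrow> S - T \<in> bic H"
proof (rule bicI)
  assume S: "S \<in> bic H" and T: "T \<in> bic H"
  show "ssym (S - T)" using S T by (simp add: ssym_diff bic_ssym)
  fix U assume u: "U * H = H * U"
  show "U * (S - T) = (S - T) * U" using bic_comm'[OF S u] bic_comm'[OF T u] by (simp add: left_diff_distrib right_diff_distrib)
qed
lemma bic_scaleR: "T \<in> bic H \<Longrightarrow> r *\<^sub>R T \<in> bic H"
  by (rule bicI) (auto simp: ssym_scaleR bic_ssym dest: bic_comm')
lemma bic_mult: "S \<in> bic H \<Longrightarrow> T \<in> bic H \<Longrightarrow> S * T \<in> bic H"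
proof (rule bicI)
  assume S: "S \<in> bic H" and T: "T \<in> bic H"
  show "ssym (S * T)" by (rule ssym_mult[OF bic_ssym[OF S] bic_ssym[OF T] bic_comm[OF S T]])
  fix U assume "U * H = H * U"
  then have "U * S = S * U" "U * T = T * U" using bic_comm'[OF S] bic_comm'[OF T] by auto
  then show "U * (S * T) = S * T * U" by (metis mult.assoc)
qed
lemma bic_power: "T \<in> bic H \<Longrightarrow> T ^ n \<in> bic H"
  by (induction n) (auto simp: bic_one bic_mult)
lemma bic_sum: "(\<And>i. i \<in> A \<Longrightarrow> f i \<in> bic H) \<Longrightarrow> sum f A \<in> bic H"
  by (induction A rule: infinite_finite_induct) (auto simp: bic_zero bic_add)
lemma bic_sqs: "T \<in> bic H \<Longrightarrow> norm T \<le> 1 \<Longrightarrow> sqs T \<in> bic H"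
proof (rule bicI)
  assume T: "T \<in> bic H" and n: "norm T \<le> 1"
  show "ssym (sqs T)" by (rule ssym_sqs[OF n bic_ssym[OF T]])
  fix U assume "U * H = H * U"
  then have "U * T = T * U" using bic_comm'[OF T] by auto
  then show "U * sqs T = sqs T * U" by (rule sqs_comm[OF n])
qed

lemma norm_sq_le: "ssym a \<Longrightarrow> norm a ^ 2 \<le> norm (a * a)"
  using W_lemma[of a 0] by (simp add: ssym_zero)

definition pos :: "'a::cstar_algebra sop \<Rightarrow> 'a sop \<Rightarrow> bool" where
  "pos H P \<longleftrightarrow> (\<exists>r\<in>bic H. P = r * r)"

lemma pos_zero: "pos H 0"
  unfolding pos_def using bic_zero by force

lemma pos_mult: "pos H P \<Longrightarrow> pos H Q \<Longrightarrow> pos H (P * Q)"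
proof -
  assume "pos H P" "pos H Q"
  then obtain p q where p: "p \<in> bic H" "P = p * p" and q: "q \<in> bic H" "Q = q * q"
    unfolding pos_def by blast
  have c: "p * q = q * p" by (rule bic_comm[OF p(1) q(1)])
  have "P * Q = (p * q) * (p * q)" using p(2) q(2) c by (metis mult.assoc)
  then show ?thesis unfolding pos_def using bic_mult[OF p(1) q(1)] by blast
qed

lemma pos_scaleR: "0 \<le> c \<Longrightarrow> pos H P \<Longrightarrow> pos H (c *\<^sub>R P)"
proof -
  assume c: "0 \<le> c" and "pos H P"
  then obtain p where p: "p \<in> bic H" "P = p * p" unfolding pos_def by blast
  have "c *\<^sub>R P = (sqrt c *\<^sub>R p) * (sqrt c *\<^sub>R p)"
    using c p(2) by (simp add: real_sqrt_mult[symmetric])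
  then show ?thesis unfolding pos_def using bic_scaleR[OF p(1)] by blast
qed

lemma pos_mono: "pos H P \<Longrightarrow> pos H Q \<Longrightarrow> norm P \<le> norm (P + Q)"
proof -
  assume "pos H P" "pos H Q"
  then obtain p q where p: "p \<in> bic H" "P = p * p" and q: "q \<in> bic H" "Q = q * q"
    unfolding pos_def by blast
  have "norm p ^ 2 \<le> norm (p * p + q * q)"
    by (rule W_lemma[OF bic_ssym[OF p(1)] bic_ssym[OF q(1)] bic_comm[OF p(1) q(1)]])
  moreover have "norm P \<le> norm p ^ 2" using p(2) norm_mult_ineq[of p p] by (simp add: power2_eq_square)
  ultimately show ?thesis using p(2) q(2) by simp
qed

lemma N_lemma:
  assumes w: "w \<in> bic H"
  shows "norm ((norm w) ^ 2 *\<^sub>R 1 - w * w) \<le> (norm w) ^ 2"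
proof (cases "w = 0")
  case True then show ?thesis by simp
next
  case False
  define m where "m = norm w"
  have m0: "m > 0" using False unfolding m_def by simp
  define T where "T = (1 / m ^ 2) *\<^sub>R (w * w)"
  have nT: "norm T \<le> 1"
  proof -
    have "norm T = norm (w * w) / m ^ 2" unfolding T_def by simp
    also have "\<dots> \<le> m ^ 2 / m ^ 2"
      using norm_mult_ineq[of w w] m0 unfolding m_def by (intro divide_right_mono) (auto simp: power2_eq_square)
    also have "\<dots> = 1" using m0 by simp
    finally show ?thesis .
  qed
  have Tb: "T \<in> bic H" unfolding T_def by (intro bic_scaleR bic_mult w)
  define R where "R = 1 - sqs T"
  have Rb: "R \<in> bic H" unfolding R_def by (intro bic_diff bic_one bic_sqs Tb nT)
  have RR: "R * R = 1 - T" unfolding R_def by (rule sqrt_one_minus[OF nT])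
  define k where "k = (1 / m) *\<^sub>R w"
  have kb: "k \<in> bic H" unfolding k_def by (intro bic_scaleR w)
  have kk: "k * k = T" unfolding k_def T_def by (simp add: power2_eq_square)
  have "norm R ^ 2 \<le> norm (R * R + k * k)"
    by (rule W_lemma[OF bic_ssym[OF Rb] bic_ssym[OF kb] bic_comm[OF Rb kb]])
  also have "\<dots> \<le> 1" unfolding RR kk using norm_one_sop by simp
  finally have "norm R ^ 2 \<le> 1" .
  hence "norm (1 - T) \<le> 1"
    using norm_mult_ineq[of R R] unfolding RR by (simp add: power2_eq_square)
  moreover have "(norm w) ^ 2 *\<^sub>R 1 - w * w = m ^ 2 *\<^sub>R (1 - T)"
    unfolding T_def m_def using m0 unfolding m_def by (simp add: scaleR_diff_right)
  ultimately show ?thesis unfolding m_def using m0 unfolding m_def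
    by (simp add: mult_left_le)
qed

lemma pos_add: "pos H P \<Longrightarrow> pos H Q \<Longrightarrow> pos H (P + Q)"
proof -
  assume "pos H P" "pos H Q"
  then obtain p q where p: "p \<in> bic H" "P = p * p" and q: "q \<in> bic H" "Q = q * q"
    unfolding pos_def by blast
  define K where "K = norm p ^ 2 + norm q ^ 2"
  show ?thesis
  proof (cases "K = 0")
    case True
    then have "p = 0" "q = 0" unfolding K_def by (auto simp: add_nonneg_eq_0_iff)
    then show ?thesis using p q pos_zero by simp
  next
    case False
    then have K0: "K > 0" unfolding K_def by (simp add: add_pos_nonneg order_le_neq_trans)
    define T where "T = (1 / K) *\<^sub>R ((norm p ^ 2 *\<^sub>R 1 - p * p) + (norm q ^ 2 *\<^sub>R 1 - q * q))"
    have Tb: "T \<in> bic H" unfolding T_def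
      by (intro bic_scaleR bic_add bic_diff bic_one bic_mult p(1) q(1))
    have nT: "norm T \<le> 1"
    proof -
      have "norm T \<le> (1 / K) * (norm (norm p ^ 2 *\<^sub>R 1 - p * p) + norm (norm q ^ 2 *\<^sub>R 1 - q * q))"
        unfolding T_def using K0 by (simp add: norm_triangle_ineq divide_right_mono)
      also have "\<dots> \<le> (1 / K) * K"
        unfolding K_def using N_lemma[OF p(1)] N_lemma[OF q(1)] K0
        by (intro mult_left_mono add_mono) auto
      also have "\<dots> = 1" using K0 by simp
      finally show ?thesis .
    qed
    define r where "r = sqrt K *\<^sub>R (1 - sqs T)"
    have rb: "r \<in> bic H" unfolding r_def by (intro bic_scaleR bic_diff bic_one bic_sqs Tb nT)
    have "r * r = K *\<^sub>R (1 - T)"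
      unfolding r_def using sqrt_one_minus[OF nT] K0 by simp
    also have "\<dots> = K *\<^sub>R 1 - K *\<^sub>R T" by (simp add: scaleR_diff_right)
    also have "K *\<^sub>R T = (norm p ^ 2 *\<^sub>R 1 - p * p) + (norm q ^ 2 *\<^sub>R 1 - q * q)"
      unfolding T_def using K0 by simp
    also have "K *\<^sub>R (1::'a sop) = norm p ^ 2 *\<^sub>R 1 + norm q ^ 2 *\<^sub>R 1"
      unfolding K_def by (simp add: scaleR_add_left)
    also have "norm p ^ 2 *\<^sub>R 1 + norm q ^ 2 *\<^sub>R 1 - ((norm p ^ 2 *\<^sub>R 1 - p * p) + (norm q ^ 2 *\<^sub>R 1 - q * q)) = P + Q"
      using p(2) q(2) by simp
    finally show ?thesis unfolding pos_def using rb by metis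
  qed
qed

lemma pos_sum: "(\<And>i. i \<in> A \<Longrightarrow> pos H (f i)) \<Longrightarrow> pos H (sum f A)"
  by (induction A rule: infinite_finite_induct) (auto simp: pos_zero pos_add)

lemma pos_sq: "r \<in> bic H \<Longrightarrow> pos H (r * r)"
  unfolding pos_def by blast

lemma power_mult_comm: "(a::'a::monoid_mult) * b = b * a \<Longrightarrow> (a * b) ^ n = a ^ n * b ^ n"
proof (induction n)
  case 0 then show ?case by simp
next
  case (Suc n)
  have c: "b ^ n * a = a * b ^ n" using power_commutes_gen[of a b n] Suc.prems by simp
  have "(a * b) ^ Suc n = a * b * (a ^ n * b ^ n)" using Suc by simp
  also have "\<dots> = a * (b * a ^ n) * b ^ n" by (simp add: mult.assoc)
  also have "b * a ^ n = a ^ n * b" using power_commutes_gen[of b a n] Suc.prems by simp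
  also have "a * (a ^ n * b) * b ^ n = a ^ Suc n * b ^ Suc n"
    by (simp add: mult.assoc power_commutes)
  finally show ?case .
qed

lemma K_bound:
  fixes H :: "'a::cstar_algebra sop"
  assumes sH: "ssym H" and nH: "norm H \<le> 1"
  shows "norm (H * (1 - H * H) ^ (2 * n)) \<le> sqrt (2 / (2 * n + 1))"
proof -
  have Hb: "H \<in> bic H" by (rule bic_H[OF sH])
  have nHH: "norm (H * H) \<le> 1" using norm_mult_ineq[of H H] nH
    by (meson mult_le_one norm_ge_zero order_trans)
  have HHb: "H * H \<in> bic H" by (intro bic_mult Hb)
  define C where "C = 1 - sqs (H * H)"
  define X where "X = 1 - H * H"
  have Cb: "C \<in> bic H" unfolding C_def by (intro bic_diff bic_one bic_sqs HHb nHH)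
  have CC: "C * C = X" unfolding C_def X_def by (rule sqrt_one_minus[OF nHH])
  have Xb: "X \<in> bic H" unfolding X_def by (intro bic_diff bic_one HHb)
  have nC: "norm C \<le> 1"
  proof -
    have "norm C ^ 2 \<le> norm (C * C + H * H)"
      by (rule W_lemma[OF bic_ssym[OF Cb] sH bic_comm[OF Cb Hb]])
    also have "C * C + H * H = 1" unfolding CC X_def by simp
    finally have "norm C ^ 2 \<le> 1" using norm_one_sop[where 'a='a] by linarith
    then show ?thesis by (simp add: power_le_one_iff abs_le_iff)
  qed
  have nX: "norm X \<le> 1" unfolding CC[symmetric] using norm_mult_ineq[of C C] nC
    by (meson mult_le_one norm_ge_zero order_trans)
  have CjCj: "C ^ j * C ^ j = X ^ j" for j
    using power_mult_comm[of C C j] CC by simp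
  define P where "P j = (H * C ^ j) * (H * C ^ j)" for j
  have Pb: "H * C ^ j \<in> bic H" for j by (intro bic_mult bic_power Hb Cb)
  have Ppos: "pos H (P j)" for j unfolding P_def by (rule pos_sq[OF Pb])
  have Peq: "P j = H * H * X ^ j" for j
  proof -
    have "H * C ^ j = C ^ j * H" by (rule bic_comm[OF Hb bic_power[OF Cb]])
    have "P j = H * (C ^ j * H) * C ^ j" unfolding P_def by (simp only: mult.assoc)
    also have "\<dots> = H * (H * C ^ j) * C ^ j" using \<open>H * C ^ j = C ^ j * H\<close> by simp
    also have "\<dots> = H * H * (C ^ j * C ^ j)" by (simp only: mult.assoc)
    finally show ?thesis by (simp add: CjCj)
  qed
  have tele: "(\<Sum>j<m. P j) = 1 - X ^ m" for m
  proof (induction m)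
    case 0 then show ?case by simp
  next
    case (Suc m)
    have "(\<Sum>j<Suc m. P j) = 1 - X ^ m + H * H * X ^ m" using Suc by (simp add: Peq)
    also have "H * H = 1 - X" unfolding X_def by simp
    also have "1 - X ^ m + (1 - X) * X ^ m = 1 - X ^ Suc m" by (simp add: algebra_simps)
    finally show ?case .
  qed
  have onepos: "pos H (1 - X ^ m)" for m
    unfolding tele[symmetric] by (rule pos_sum) (rule Ppos)
  have Dpos: "pos H (P j - P J)" if "j \<le> J" for j J
  proof -
    have "X ^ J = X ^ j * X ^ (J - j)" using that by (simp add: power_add[symmetric])
    then have "P j - P J = P j * (1 - X ^ (J - j))" by (simp add: Peq algebra_simps mult.assoc)
    then show ?thesis using pos_mult[OF Ppos onepos] by simp
  qed
  define J where "J = 2 * n"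
  have split: "(\<Sum>j<Suc J. P j) = real (Suc J) *\<^sub>R P J + (\<Sum>j<Suc J. P j - P J)"
  proof -
    have "(\<Sum>j<Suc J. P j) = (\<Sum>j<Suc J. P J + (P j - P J))" by simp
    also have "\<dots> = (\<Sum>j<Suc J. P J) + (\<Sum>j<Suc J. P j - P J)" by (rule sum.distrib)
    also have "(\<Sum>j<Suc J. P J) = real (Suc J) *\<^sub>R P J" by (simp only: sum_constant_scaleR card_lessThan)
    finally show ?thesis .
  qed
  have "norm (real (Suc J) *\<^sub>R P J) \<le> norm (real (Suc J) *\<^sub>R P J + (\<Sum>j<Suc J. P j - P J))"
    by (rule pos_mono) (auto intro!: pos_scaleR Ppos pos_sum Dpos)
  also have "\<dots> = norm (1 - X ^ Suc J)" using split tele[of "Suc J"] by (simp only:)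
  also have "\<dots> \<le> norm (1::'a sop) + norm (X ^ Suc J)" by (rule norm_triangle_ineq4)
  also have "\<dots> \<le> 2"
  proof -
    have "norm (X ^ Suc J) \<le> 1" using norm_power_sop[of X "Suc J"] nX
      by (meson norm_ge_zero order_trans power_le_one)
    then show ?thesis using norm_one_sop[where 'a='a] by linarith
  qed
  finally have PJ: "real (Suc J) * norm (P J) \<le> 2" by simp
  have "norm (H * C ^ J) ^ 2 \<le> norm (P J)" unfolding P_def
    by (rule norm_sq_le[OF bic_ssym[OF Pb]])
  also have "\<dots> \<le> 2 / (2 * n + 1)" using PJ unfolding J_def by (simp add: field_simps)
  finally have hc: "norm (H * C ^ J) \<le> sqrt (2 / (2 * n + 1))" by (simp add: real_le_rsqrt)
  have "H * (1 - H * H) ^ (2 * n) = (H * C ^ J) * C ^ J"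
    unfolding X_def[symmetric] J_def CjCj[symmetric] by (simp add: mult.assoc)
  also have "norm \<dots> \<le> norm (H * C ^ J) * norm (C ^ J)" by (rule norm_mult_ineq)
  also have "\<dots> \<le> norm (H * C ^ J) * 1"
  proof (rule mult_left_mono)
    show "norm (C ^ J) \<le> 1" using norm_power_sop[of C J] nC
      by (meson norm_ge_zero order_trans power_le_one)
  qed simp
  finally have "norm (H * (1 - H * H) ^ (2 * n)) \<le> norm (H * C ^ J)" by simp
  from order_trans[OF this hc] show ?thesis by (simp add: add.commute)
qed

lemma sop_eqI:
  assumes "\<And>y. app a y = app b y" shows "a = b"
proof -
  have "opb a = opb b" by (rule blinfun_eqI) (use assms in \<open>simp add: app_def\<close>)
  thus ?thesis by (simp add: opb_inject)
qed

definition Lm :: "'a::cstar_algebra \<Rightarrow> 'a sop" where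
  "Lm x = Abs_sop (Blinfun (\<lambda>y. x * y))"

lemma app_Lm[simp]: "app (Lm x) y = x * y"
  unfolding app_def Lm_def
  by (simp add: Abs_sop_inverse bounded_linear_Blinfun_apply bounded_linear_mult_right)

lemma Lm_mult: "Lm (x * y) = Lm x * Lm y"
  by (rule sop_eqI) (simp add: mult.assoc)
lemma Lm_add: "Lm (x + y) = Lm x + Lm y"
  by (rule sop_eqI) (simp add: distrib_right)
lemma Lm_diff: "Lm (x - y) = Lm x - Lm y"
  by (rule sop_eqI) (simp add: left_diff_distrib)
lemma Lm_scaleR: "Lm (r *\<^sub>R x) = r *\<^sub>R Lm x"
  by (rule sop_eqI) simp

lemma norm_Lm_le: "norm (Lm x) \<le> norm x"
  by (rule norm_sop_bound) (auto simp: norm_mult_ineq)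

lemma norm_le_Lm: "norm x \<le> norm (Lm x)"
proof (cases "x = 0")
  case True then show ?thesis by simp
next
  case False
  have "norm x ^ 2 = norm (cstar (cstar x) * cstar x)"
    using cstar_identity[of "cstar x"] by simp
  also have "\<dots> = norm (app (Lm x) (cstar x))" by (simp add: cstar_cstar)
  also have "\<dots> \<le> norm (Lm x) * norm x" using norm_app[of "Lm x" "cstar x"] by simp
  finally have "norm x * norm x \<le> norm (Lm x) * norm x" by (simp add: power2_eq_square)
  then show ?thesis using False by simp
qed

lemma ssym_Lm: "cstar x = x \<Longrightarrow> ssym (Lm x)"
  unfolding ssym_def by (simp add: cstar_mult mult.assoc)

lemma cscale_sum: "cscale c (sum f A) = (\<Sum>i\<in>A. cscale c (f i :: 'a::cstar_algebra))"
  by (induction A rule: infinite_finite_induct) (auto simp: cscale_add_right)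

lemma clin_span_zero: "0 \<in> clin_span S"
  unfolding clin_span_def by (rule CollectI, rule exI[of _ "{}"]) auto

lemma clin_span_base: "s \<in> S \<Longrightarrow> s \<in> clin_span S"
  unfolding clin_span_def by (rule CollectI, rule exI[of _ "{s}"], rule exI[of _ "\<lambda>_. 1"]) (auto simp: cscale_one)

lemma clin_span_cscale: "x \<in> clin_span S \<Longrightarrow> cscale a x \<in> clin_span S"
proof -
  assume "x \<in> clin_span S"
  then obtain F c where F: "finite F" "F \<subseteq> S" "x = (\<Sum>s\<in>F. cscale (c s) s)"
    unfolding clin_span_def by blast
  have "cscale a x = (\<Sum>s\<in>F. cscale (a * c s) s)"
    unfolding F(3) cscale_sum by (simp add: cscale_cscale)
  then show ?thesis unfolding clin_span_def using F
    by (intro CollectI exI[of _ F] exI[of _ "\<lambda>s. a * c s"]) simp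
qed

lemma clin_span_add: "x \<in> clin_span S \<Longrightarrow> y \<in> clin_span S \<Longrightarrow> x + y \<in> clin_span S"
proof -
  assume "x \<in> clin_span S" "y \<in> clin_span S"
  then obtain F c G d where F: "finite F" "F \<subseteq> S" "x = (\<Sum>s\<in>F. cscale (c s) s)"
    and G: "finite G" "G \<subseteq> S" "y = (\<Sum>s\<in>G. cscale (d s) s)"
    unfolding clin_span_def by blast
  define c' where "c' s = (if s \<in> F then c s else 0)" for s
  define d' where "d' s = (if s \<in> G then d s else 0)" for s
  have x: "x = (\<Sum>s\<in>F \<union> G. cscale (c' s) s)"
    unfolding F(3) by (rule sum.mono_neutral_cong_left) (auto simp: F G c'_def)
  have y: "y = (\<Sum>s\<in>F \<union> G. cscale (d' s) s)"
    unfolding G(3) by (rule sum.mono_neutral_cong_left) (auto simp: F G d'_def)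
  have "x + y = (\<Sum>s\<in>F \<union> G. cscale (c' s + d' s) s)"
    unfolding x y by (simp add: cscale_add_left sum.distrib)
  then show ?thesis unfolding clin_span_def using F G
    by (intro CollectI exI[of _ "F \<union> G"] exI[of _ "\<lambda>s. c' s + d' s"]) simp
qed

lemma clin_span_diff: "x \<in> clin_span S \<Longrightarrow> y \<in> clin_span S \<Longrightarrow> x - y \<in> clin_span S"
  using clin_span_add[of x S "cscale (-1) y"] clin_span_cscale[of y S "-1"]
  by (simp add: cscale_minus_left cscale_one)

lemma clin_span_mono: "S \<subseteq> T \<Longrightarrow> clin_span S \<subseteq> clin_span T"
  unfolding clin_span_def by blast

lemma clin_span_sub:
  assumes "S \<subseteq> V" "0 \<in> V" "\<And>x y. x \<in> V \<Longrightarrow> y \<in> V \<Longrightarrow> x + y \<in> V"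
    "\<And>c x. x \<in> V \<Longrightarrow> cscale c x \<in> V"
  shows "clin_span S \<subseteq> V"
proof
  fix x assume "x \<in> clin_span S"
  then obtain F c where F: "finite F" "F \<subseteq> S" "x = (\<Sum>s\<in>F. cscale (c s) s)"
    unfolding clin_span_def by blast
  have "(\<Sum>s\<in>F. cscale (c s) s) \<in> V" using F(1,2)
    by (induction F rule: finite_induct) (use assms in auto)
  then show "x \<in> V" using F by simp
qed

lemma bounded_linear_cscale: "bounded_linear (cscale c :: 'a::cstar_algebra \<Rightarrow> 'a)"
proof (rule bounded_linear_intro[where K="cmod c"])
  show "cscale c (x + y) = cscale c x + cscale c y" for x y :: 'a by (rule cscale_add_right)
  show "cscale c (r *\<^sub>R x) = r *\<^sub>R cscale c x" for r and x :: 'a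
    by (simp add: cscale_of_real[symmetric] cscale_cscale mult.commute)
  show "norm (cscale c x) \<le> norm x * cmod c" for x :: 'a by (simp add: norm_cscale mult.commute)
qed

lemma clspan_closed: "closed (clspan S)"
  unfolding clspan_def by simp

lemma clspan_add: "x \<in> clspan S \<Longrightarrow> y \<in> clspan S \<Longrightarrow> x + y \<in> clspan S"
proof -
  assume "x \<in> clspan S" "y \<in> clspan S"
  then obtain xs ys where xs: "\<forall>n. xs n \<in> clin_span S" "xs \<longlonglongrightarrow> x"
    and ys: "\<forall>n. ys n \<in> clin_span S" "ys \<longlonglongrightarrow> y"
    unfolding clspan_def closure_sequential by blast
  have "(\<lambda>n. xs n + ys n) \<longlonglongrightarrow> x + y" by (intro tendsto_add xs ys)
  moreover have "\<forall>n. xs n + ys n \<in> clin_span S" using xs ys by (auto intro: clin_span_add)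
  ultimately show ?thesis unfolding clspan_def closure_sequential
    by (intro exI[of _ "\<lambda>n. xs n + ys n"]) auto
qed

lemma clspan_cscale: "x \<in> clspan S \<Longrightarrow> cscale c x \<in> clspan S"
proof -
  assume "x \<in> clspan S"
  then obtain xs where xs: "\<forall>n. xs n \<in> clin_span S" "xs \<longlonglongrightarrow> x"
    unfolding clspan_def closure_sequential by blast
  have "(\<lambda>n. cscale c (xs n)) \<longlonglongrightarrow> cscale c x"
    by (rule bounded_linear.tendsto[OF bounded_linear_cscale xs(2)])
  moreover have "\<forall>n. cscale c (xs n) \<in> clin_span S" using xs by (auto intro: clin_span_cscale)
  ultimately show ?thesis unfolding clspan_def closure_sequential
    by (intro exI[of _ "\<lambda>n. cscale c (xs n)"]) auto
qed

lemma clspan_zero: "0 \<in> clspan S"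
  unfolding clspan_def using clin_span_zero closure_subset by blast

lemma clspan_base: "s \<in> S \<Longrightarrow> s \<in> clspan S"
  unfolding clspan_def using clin_span_base closure_subset by blast

lemma clspan_sub:
  assumes "S \<subseteq> clspan T"
  shows "clspan S \<subseteq> clspan T"
proof -
  have "clin_span S \<subseteq> clspan T"
    by (rule clin_span_sub[OF assms clspan_zero]) (auto intro: clspan_add clspan_cscale)
  then show ?thesis unfolding clspan_def[of S] by (rule closure_minimal[OF _ clspan_closed])
qed

lemma core:
  fixes z :: "'a::cstar_algebra"
  defines "t \<equiv> cstar z * z"
  shows "z \<in> closure (clin_span (setmult UNIV {t * t}))"
proof -
  define M where "M = norm t + 1"
  have M0: "M > 0" unfolding M_def by (simp add: add_nonneg_pos)
  have ts: "cstar t = t" unfolding t_def by (simp add: cstar_mult cstar_cstar)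
  define T where "T = (1 / M) *\<^sub>R Lm t"
  have sT: "ssym T" unfolding T_def by (intro ssym_scaleR ssym_Lm ts)
  have nT: "norm T \<le> 1"
  proof -
    have "norm T = norm (Lm t) / M" unfolding T_def using M0 by simp
    also have "\<dots> \<le> M / M" using norm_Lm_le[of t] M0 unfolding M_def by (intro divide_right_mono) auto
    finally show ?thesis using M0 by simp
  qed
  have Tb: "T \<in> bic T" by (rule bic_H[OF sT])
  define q where "q = (1 / M ^ 2) *\<^sub>R (t * t)"
  have qs: "cstar q = q" unfolding q_def by (simp add: cstar_scaleR cstar_mult ts)
  have LT: "Lm t = M *\<^sub>R T" unfolding T_def using M0 by simp
  have Lq: "Lm q = T * T" unfolding q_def Lm_scaleR Lm_mult LT using M0
    by (simp add: power2_eq_square)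
  define X where "X = 1 - T * T"
  have Xb: "X \<in> bic T" unfolding X_def by (intro bic_diff bic_one bic_mult Tb)
  define g where "g = rec_nat z (\<lambda>_ w. w - w * q)"
  have g0: "g 0 = z" and gS: "g (Suc n) = g n - g n * q" for n unfolding g_def by simp_all
  have A: "Lm (cstar (g n) * g n) = M *\<^sub>R (T * X ^ (2 * n))" for n
  proof (induction n)
    case 0 then show ?case using g0 LT unfolding t_def by simp
  next
    case (Suc n)
    define G where "G = g n"
    define F where "F = M *\<^sub>R (T * X ^ (2 * n))"
    have Fb: "F \<in> bic T" unfolding F_def by (intro bic_scaleR bic_mult bic_power Tb Xb)
    have Qb: "T * T \<in> bic T" by (intro bic_mult Tb)
    have FQ: "F * (T * T) = (T * T) * F" by (rule bic_comm[OF Fb Qb])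
    have "cstar (G - G * q) * (G - G * q) = (cstar G - q * cstar G) * (G - G * q)"
      by (simp add: cstar_diff cstar_mult qs)
    also have "\<dots> = cstar G * G - cstar G * G * q - q * (cstar G * G) + q * (cstar G * G) * q"
      by (simp add: algebra_simps)
    finally have e: "cstar (G - G * q) * (G - G * q) = cstar G * G - cstar G * G * q - q * (cstar G * G) + q * (cstar G * G) * q" .
    define bb where "bb = cstar G * G"
    have IH': "Lm bb = F" unfolding bb_def G_def F_def by (rule Suc.IH)
    have "Lm (bb - bb * q - q * bb + q * bb * q) = Lm bb - Lm bb * Lm q - Lm q * Lm bb + Lm q * Lm bb * Lm q"
      by (simp add: Lm_add Lm_diff Lm_mult)
    then have "Lm (cstar (g (Suc n)) * g (Suc n)) = F - F * (T * T) - (T * T) * F + (T * T) * F * (T * T)"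
      unfolding gS G_def[symmetric] e bb_def[symmetric] IH' Lq .
    also have "\<dots> = F * X * X" unfolding X_def using FQ by (simp add: algebra_simps)
    also have "\<dots> = M *\<^sub>R (T * X ^ (2 * Suc n))" unfolding F_def
      by (simp add: mult.assoc power_add[symmetric] power2_eq_square[symmetric])
    finally show ?case .
  qed
  have B: "norm (g n) \<le> sqrt (M * sqrt (2 * inverse (real (Suc n))))" for n
  proof -
    have "norm (g n) ^ 2 = norm (cstar (g n) * g n)" by (simp add: cstar_identity)
    also have "\<dots> \<le> norm (Lm (cstar (g n) * g n))" by (rule norm_le_Lm)
    also have "\<dots> = M * norm (T * (1 - T * T) ^ (2 * n))" unfolding A X_def using M0 by simp
    also have "\<dots> \<le> M * sqrt (2 / (2 * real n + 1))"
      by (rule mult_left_mono[OF K_bound[OF sT nT, of n]]) (use M0 in simp)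
    also have "\<dots> \<le> M * sqrt (2 * inverse (real (Suc n)))"
      using M0 by (intro mult_left_mono real_sqrt_le_mono) (auto simp: field_simps)
    finally show ?thesis by (simp add: real_le_rsqrt)
  qed
  have lim0: "(\<lambda>n. sqrt (M * sqrt (2 * inverse (real (Suc n))))) \<longlonglongrightarrow> 0"
    using tendsto_real_sqrt[OF tendsto_mult_left[OF tendsto_real_sqrt[OF tendsto_mult_left[OF LIMSEQ_inverse_real_of_nat, of 2]], of M]]
    by simp
  have gl: "g \<longlonglongrightarrow> 0"
    by (rule Lim_null_comparison[OF _ lim0]) (use B in auto)
  have C: "z - g n \<in> clin_span (setmult UNIV {t * t})" for n
  proof (induction n)
    case 0 then show ?case using g0 clin_span_zero by simp
  next
    case (Suc n)
    have "g n * q = cscale (complex_of_real (1 / M ^ 2)) (g n * (t * t))"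
      unfolding q_def cscale_of_real by simp
    moreover have "g n * (t * t) \<in> setmult UNIV {t * t}" unfolding setmult_def by blast
    ultimately have "g n * q \<in> clin_span (setmult UNIV {t * t})"
      by (simp add: clin_span_cscale clin_span_base)
    then have "(z - g n) + g n * q \<in> clin_span (setmult UNIV {t * t})"
      by (rule clin_span_add[OF Suc.IH])
    then show ?case by (simp add: gS algebra_simps)
  qed
  have "(\<lambda>n. z - g n) \<longlonglongrightarrow> z - 0" by (intro tendsto_diff tendsto_const gl)
  then show ?thesis unfolding closure_sequential using C
    by (intro exI[of _ "\<lambda>n. z - g n"]) auto
qed

lemma clin_span_cstar:
  "cstar ` clin_span (setmult UNIV S) \<subseteq> clin_span (setmult (cstar ` S) (UNIV :: 'a::cstar_algebra set))"
proof
  fix y assume "y \<in> cstar ` clin_span (setmult UNIV S)"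
  then obtain x where x: "x \<in> clin_span (setmult UNIV S)" "y = cstar x" by blast
  then obtain F c where F: "finite F" "F \<subseteq> setmult UNIV S" "x = (\<Sum>s\<in>F. cscale (c s) s)"
    unfolding clin_span_def by blast
  have inj: "inj_on cstar F" by (metis cstar_cstar inj_on_inverseI)
  have "y = (\<Sum>s\<in>F. cscale (cnj (c s)) (cstar s))"
    unfolding x(2) F(3) cstar_sum by (simp add: cstar_cscale)
  also have "\<dots> = (\<Sum>v\<in>cstar ` F. cscale (cnj (c (cstar v))) v)"
    by (subst sum.reindex[OF inj]) (simp add: cstar_cstar)
  finally have y: "y = (\<Sum>v\<in>cstar ` F. cscale (cnj (c (cstar v))) v)" .
  have "cstar ` F \<subseteq> setmult (cstar ` S) UNIV"
  proof
    fix v assume "v \<in> cstar ` F"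
    then obtain u where u: "u \<in> F" "v = cstar u" by blast
    then obtain b w where bw: "u = b * w" "w \<in> S" using F(2) unfolding setmult_def by blast
    have "v = cstar w * cstar b" using u bw by (simp add: cstar_mult)
    then show "v \<in> setmult (cstar ` S) UNIV" unfolding setmult_def using bw by blast
  qed
  then show "y \<in> clin_span (setmult (cstar ` S) UNIV)"
    unfolding clin_span_def using F(1) y
    by (intro CollectI exI[of _ "cstar ` F"] exI[of _ "\<lambda>v. cnj (c (cstar v))"]) simp
qed

lemma core_mirror:
  fixes z :: "'a::cstar_algebra"
  defines "s \<equiv> z * cstar z"
  shows "z \<in> closure (clin_span (setmult {s * s} UNIV))"
proof -
  have ss: "cstar s = s" unfolding s_def by (simp add: cstar_mult cstar_cstar)
  have w: "cstar z \<in> closure (clin_span (setmult UNIV {s * s}))"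
    using core[of "cstar z"] unfolding s_def by (simp add: cstar_cstar)
  have "cstar ` closure (clin_span (setmult UNIV {s * s})) \<subseteq> closure (cstar ` clin_span (setmult UNIV {s * s}))"
    by (rule image_closure_subset[OF continuous_cstar closed_closure closure_subset])
  also have "\<dots> \<subseteq> closure (clin_span (setmult (cstar ` {s * s}) UNIV))"
    by (rule closure_mono[OF clin_span_cstar])
  also have "cstar ` {s * s} = {s * s}" by (simp add: cstar_mult ss)
  finally show ?thesis using w by (metis cstar_cstar image_eqI subsetD)
qed

lemma extend_left:
  fixes x :: "'a::cstar_algebra"
  assumes N: "\<And>n. n \<in> N \<Longrightarrow> x * n \<in> clspan T" and U: "clspan N = UNIV"
  shows "x * b \<in> clspan T"
proof -
  define W where "W = (\<lambda>b. x * b) -` clspan T"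
  have "clin_span N \<subseteq> W" unfolding W_def
  proof (rule clin_span_sub)
    show "N \<subseteq> (\<lambda>b. x * b) -` clspan T" using N by auto
    show "0 \<in> (\<lambda>b. x * b) -` clspan T" by (simp add: clspan_zero)
    show "a + b \<in> (\<lambda>b. x * b) -` clspan T" if "a \<in> (\<lambda>b. x * b) -` clspan T" "b \<in> (\<lambda>b. x * b) -` clspan T" for a b
      using that clspan_add by (fastforce simp: distrib_left)
    show "cscale c a \<in> (\<lambda>b. x * b) -` clspan T" if "a \<in> (\<lambda>b. x * b) -` clspan T" for c a
      using that clspan_cscale by (fastforce simp: cscale_mult_right)
  qed
  moreover have "closed W" unfolding W_def
    by (rule continuous_closed_vimage[OF clspan_closed]) (intro continuous_intros)
  ultimately have "closure (clin_span N) \<subseteq> W" by (rule closure_minimal)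
  then have "b \<in> W" using U unfolding clspan_def by auto
  then show ?thesis unfolding W_def by simp
qed

lemma extend_right:
  fixes x :: "'a::cstar_algebra"
  assumes N: "\<And>n. n \<in> N \<Longrightarrow> n * x \<in> clspan T" and U: "clspan N = UNIV"
  shows "b * x \<in> clspan T"
proof -
  define W where "W = (\<lambda>b. b * x) -` clspan T"
  have "clin_span N \<subseteq> W" unfolding W_def
  proof (rule clin_span_sub)
    show "N \<subseteq> (\<lambda>b. b * x) -` clspan T" using N by auto
    show "0 \<in> (\<lambda>b. b * x) -` clspan T" by (simp add: clspan_zero)
    show "a + b \<in> (\<lambda>b. b * x) -` clspan T" if "a \<in> (\<lambda>b. b * x) -` clspan T" "b \<in> (\<lambda>b. b * x) -` clspan T" for a b
      using that clspan_add by (fastforce simp: distrib_right)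
    show "cscale c a \<in> (\<lambda>b. b * x) -` clspan T" if "a \<in> (\<lambda>b. b * x) -` clspan T" for c a
      using that clspan_cscale by (fastforce simp: cscale_mult_left)
  qed
  moreover have "closed W" unfolding W_def
    by (rule continuous_closed_vimage[OF clspan_closed]) (intro continuous_intros)
  ultimately have "closure (clin_span N) \<subseteq> W" by (rule closure_minimal)
  then have "b \<in> W" using U unfolding clspan_def by auto
  then show ?thesis unfolding W_def by simp
qed

lemma normalizer_cstar: "normalizer A n \<Longrightarrow> normalizer A (cstar n)"
  unfolding normalizer_def by (simp add: cstar_cstar)

lemma setmult_mono: "S \<subseteq> S' \<Longrightarrow> T \<subseteq> T' \<Longrightarrow> setmult S T \<subseteq> setmult S' T'"
  unfolding setmult_def by blast

lemma part_ii:
  fixes A :: "'a::cstar_algebra set"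
  assumes reg: "regular_subalgebra A" and I: "closed_ideal_of A I" and inv: "normalizer_invariant A I"
  shows "B_invariant I"
proof -
  have sub: "closed_star_subalgebra A" and U: "clspan {n. normalizer A n} = UNIV"
    using reg unfolding regular_subalgebra_def by auto
  have Astar: "x \<in> A \<Longrightarrow> cstar x \<in> A" for x using sub unfolding closed_star_subalgebra_def by blast
  have IA: "I \<subseteq> A" using I unfolding closed_ideal_of_def by blast
  have Iid: "x \<in> I \<Longrightarrow> a \<in> A \<Longrightarrow> a * x \<in> I \<and> x * a \<in> I" for x a
    using I unfolding closed_ideal_of_def by blast
  have Iinv: "normalizer A n \<Longrightarrow> s \<in> I \<Longrightarrow> n * s * cstar n \<in> I" for n s
    using inv unfolding normalizer_invariant_def by blast
  have L: "x * b \<in> clspan (setmult UNIV I)" if x: "x \<in> I" for x b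
  proof (rule extend_left[OF _ U])
    fix n assume "n \<in> {n. normalizer A n}"
    then have n: "normalizer A n" by simp
    define t where "t = cstar (x * n) * (x * n)"
    have xx: "cstar x * x \<in> I" using Iid[OF x Astar] IA x by blast
    have "cstar n * (cstar x * x) * cstar (cstar n) \<in> I" by (rule Iinv[OF normalizer_cstar[OF n] xx])
    then have tI: "t \<in> I" unfolding t_def by (simp add: cstar_mult cstar_cstar mult.assoc)
    have ttI: "t * t \<in> I" using Iid[OF tI] tI IA by blast
    have "x * n \<in> closure (clin_span (setmult UNIV {t * t}))" unfolding t_def by (rule core)
    also have "\<dots> \<subseteq> clspan (setmult UNIV I)" unfolding clspan_def
      by (intro closure_mono clin_span_mono setmult_mono) (use ttI in auto)
    finally show "x * n \<in> clspan (setmult UNIV I)" .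
  qed
  have R: "b * x \<in> clspan (setmult I UNIV)" if x: "x \<in> I" for x b
  proof (rule extend_right[OF _ U])
    fix n assume "n \<in> {n. normalizer A n}"
    then have n: "normalizer A n" by simp
    define s where "s = (n * x) * cstar (n * x)"
    have xx: "x * cstar x \<in> I" using Iid[OF x Astar] IA x by blast
    have "n * (x * cstar x) * cstar n \<in> I" by (rule Iinv[OF n xx])
    then have sI: "s \<in> I" unfolding s_def by (simp add: cstar_mult mult.assoc)
    have ssI: "s * s \<in> I" using Iid[OF sI] sI IA by blast
    have "n * x \<in> closure (clin_span (setmult {s * s} UNIV))" unfolding s_def by (rule core_mirror)
    also have "\<dots> \<subseteq> clspan (setmult I UNIV)" unfolding clspan_def
      by (intro closure_mono clin_span_mono setmult_mono) (use ssI in auto)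
    finally show "n * x \<in> clspan (setmult I UNIV)" .
  qed
  have "clspan (setmult I UNIV) \<subseteq> clspan (setmult UNIV I)"
    by (rule clspan_sub) (use L in \<open>unfold setmult_def, blast\<close>)
  moreover have "clspan (setmult UNIV I) \<subseteq> clspan (setmult I UNIV)"
    by (rule clspan_sub) (use R in \<open>unfold setmult_def, blast\<close>)
  ultimately show ?thesis unfolding B_invariant_def by blast
qed

theorem proposition4p2:
  fixes A :: "'a::cstar_algebra set"
  assumes "regular_subalgebra A"
  shows "(\<forall>J. closed_ideal J \<longrightarrow> normalizer_invariant A (J \<inter> A))
       \<and> (\<forall>I. closed_ideal_of A I \<and> normalizer_invariant A I \<longrightarrow> B_invariant I)
       \<and> axiom_inv A"
proof -
  have sub: "closed_star_subalgebra A" using assms unfolding regular_subalgebra_def by auto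
  have i: "normalizer_invariant A (J \<inter> A)" if J: "closed_ideal J" for J :: "'a set"
    unfolding normalizer_invariant_def
  proof (intro allI impI ballI)
    fix n s assume n: "normalizer A n" and s: "s \<in> J \<inter> A"
    have "n * s \<in> J" using J s unfolding closed_ideal_def by blast
    then have "n * s * cstar n \<in> J" using J unfolding closed_ideal_def by blast
    moreover have "n * s * cstar n \<in> A" using n s unfolding normalizer_def by blast
    ultimately show "n * s * cstar n \<in> J \<inter> A" by blast
  qed
  have ii: "B_invariant I" if "closed_ideal_of A I" "normalizer_invariant A I" for I :: "'a set"
    by (rule part_ii[OF assms that])
  have iii: "axiom_inv A"
    unfolding axiom_inv_def
  proof (intro allI impI)
    fix J :: "'a set" assume J: "closed_ideal J"
    have "closed_ideal_of A (J \<inter> A)"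
      using J sub unfolding closed_ideal_of_def closed_ideal_def closed_star_subalgebra_def csubspace_def
      by (auto intro: closed_Int)
    then show "B_invariant (J \<inter> A)" using ii i[OF J] by blast
  qed
  show ?thesis using i ii iii by blast
qed

end
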